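(* Let $\Gamma$ be a connected locally finite graph with at most countably many vertices, $G<\mathrm{Aut}(\Gamma)$, and $G_1\supset G_2\supset\cdots$ a decreasing sequence of closed normal subgroups of $G$ with $G/G_i$ amenable and $\bigcap_i G_i=\{1\}$. Let $\pi_i:\Gamma\to\Gamma/G_i$ be the quotient maps and let $D_1\subset D_2\subset\cdots$ be connected subgraphs of $\Gamma$ with $\bigcup_i D_i=\Gamma$ such that $\pi_i$ restricted to the edge set of $D_i$ is a bijection onto the edge set of $\Gamma/G_i$. For each $i$ let $\mathcal{G}_i$ be a random subgraph (random subset of edges) of $\Gamma/G_i$, let $\tilde{\mathcal{G}}_i=\pi_i^{-1}(\mathcal{G}_i)$, and let $\hat{\mathcal{G}}_i$ be the random subgraph of $\Gamma$ contained in $D_i$ that agrees with $\tilde{\mathcal{G}}_i$ on $D_i$ (i.e. $\hat{\mathcal{G}}_i=\tilde{\mathcal{G}}_i\cap E(D_i)$). Let $\mathcal{G}$ be a random subgraph of $\Gamma$. Then $\tilde{\mathcal{G}}_i\to\mathcal{G}$ in the weak* sense if and only if $\hat{\mathcal{G}}_i\to\mathcal{G}$ in the weak* sense.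
   Context: The quotient graph $\Gamma/G_i$ has as vertices the $G_i$-orbits of vertices of $\Gamma$, and for each $G_i$-orbit $[e]$ of edges of $\Gamma$ with endpoints in orbits $[v],[w]$ it has an edge $[e]$ joining $[v]$ and $[w]$; $\pi_i$ sends vertices and edges to their orbits. Random subgraphs of $\Gamma$ are random elements of $2^{E(\Gamma)}$ (product topology); $\mathcal{G}_i\to\mathcal{G}$ weak* means the laws converge in the weak* topology on Borel probability measures on $2^{E(\Gamma)}$, equivalently $\Pr(B\subset\mathcal{G}_i)\to\Pr(B\subset\mathcal{G})$ for every finite $B\subset E(\Gamma)$. *)

theory Defs
  imports "HOL-Algebra.Coset" "HOL-Probability.Probability"
begin

definition simple_graph :: "'v set \<Rightarrow> 'v set set \<Rightarrow> bool" where
  "simple_graph V E \<longleftrightarrow> (\<forall>e\<in>E. e \<subseteq> V \<and> card e = 2)"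

definition graph_connected :: "'v set \<Rightarrow> 'v set set \<Rightarrow> bool" where
  "graph_connected V E \<longleftrightarrow> (\<forall>u\<in>V. \<forall>w\<in>V. (\<lambda>x y. {x, y} \<in> E)\<^sup>*\<^sup>* u w)"

definition locally_finite :: "'v set \<Rightarrow> 'v set set \<Rightarrow> bool" where
  "locally_finite V E \<longleftrightarrow> (\<forall>v\<in>V. finite {e\<in>E. v \<in> e})"

definition auts :: "'v set \<Rightarrow> 'v set set \<Rightarrow> ('v \<Rightarrow> 'v) set" where
  "auts V E = {f. bij_betw f V V \<and> (\<forall>x. x \<notin> V \<longrightarrow> f x = x)
                 \<and> (\<forall>e. e \<subseteq> V \<longrightarrow> (e \<in> E \<longleftrightarrow> f ` e \<in> E))}"

definition aut_group :: "'v set \<Rightarrow> 'v set set \<Rightarrow> ('v \<Rightarrow> 'v) monoid" where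
  "aut_group V E = \<lparr>carrier = auts V E, monoid.mult = (\<circ>), one = id\<rparr>"

text \<open>Topology of pointwise convergence (V discrete) on a set G of permutations.\<close>

definition perm_top :: "'v set \<Rightarrow> ('v \<Rightarrow> 'v) set \<Rightarrow> ('v \<Rightarrow> 'v) topology" where
  "perm_top V G = topology (\<lambda>U. U \<subseteq> G \<and>
     (\<forall>g\<in>U. \<exists>F. finite F \<and> F \<subseteq> V \<and> {h\<in>G. \<forall>x\<in>F. h x = g x} \<subseteq> U))"

definition quot_top :: "'a topology \<Rightarrow> 'a set set \<Rightarrow> 'a set topology" where
  "quot_top T Q = topology (\<lambda>U. U \<subseteq> Q \<and> openin T (\<Union>U))"

text \<open>Bounded left uniformly continuous functions (g \<mapsto> left translate of f is
  norm-continuous), extended by 0 outside the carrier.\<close>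

definition LUC :: "('a, 'b) monoid_scheme \<Rightarrow> 'a topology \<Rightarrow> ('a \<Rightarrow> real) set" where
  "LUC Q T = {f. (\<forall>x. x \<notin> carrier Q \<longrightarrow> f x = 0) \<and> (\<exists>B. \<forall>x\<in>carrier Q. \<bar>f x\<bar> \<le> B) \<and>
     (\<forall>\<epsilon>>0. \<exists>U. openin T U \<and> \<one>\<^bsub>Q\<^esub> \<in> U \<and>
        (\<forall>u\<in>U. \<forall>x\<in>carrier Q. \<bar>f (u \<otimes>\<^bsub>Q\<^esub> x) - f x\<bar> < \<epsilon>))}"

definition amenable :: "('a, 'b) monoid_scheme \<Rightarrow> 'a topology \<Rightarrow> bool" where
  "amenable Q T \<longleftrightarrow> (\<exists>m :: ('a \<Rightarrow> real) \<Rightarrow> real.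
     (\<forall>f\<in>LUC Q T. \<forall>g\<in>LUC Q T. \<forall>a b. m (\<lambda>x. a * f x + b * g x) = a * m f + b * m g) \<and>
     m (\<lambda>x. if x \<in> carrier Q then 1 else 0) = 1 \<and>
     (\<forall>f\<in>LUC Q T. (\<forall>x\<in>carrier Q. 0 \<le> f x) \<longrightarrow> 0 \<le> m f) \<and>
     (\<forall>g\<in>carrier Q. \<forall>f\<in>LUC Q T.
        m (\<lambda>x. if x \<in> carrier Q then f (g \<otimes>\<^bsub>Q\<^esub> x) else 0) = m f))"

definition edge_orbit :: "('v \<Rightarrow> 'v) set \<Rightarrow> 'v set \<Rightarrow> 'v set set" where
  "edge_orbit N e = (\<lambda>g. g ` e) ` N"

text \<open>Edge set of the quotient graph \<Gamma>/N; \<pi>_N on edges is edge_orbit N.\<close>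

definition quot_edges :: "'v set set \<Rightarrow> ('v \<Rightarrow> 'v) set \<Rightarrow> 'v set set set" where
  "quot_edges E N = edge_orbit N ` E"

definition lift_sub :: "'v set set \<Rightarrow> ('v \<Rightarrow> 'v) set \<Rightarrow> 'v set set set \<Rightarrow> 'v set set" where
  "lift_sub E N S = {e\<in>E. edge_orbit N e \<in> S}"

text \<open>The space 2^E with its product (= Borel, E countable) sigma algebra,
  and its product topology.\<close>

definition subgraph_space :: "'e set \<Rightarrow> 'e set measure" where
  "subgraph_space E = sigma (Pow E) {{S\<in>Pow E. e \<in> S} | e. e \<in> E}"

definition subgraph_top :: "'e set \<Rightarrow> 'e set topology" where
  "subgraph_top E = topology (\<lambda>U. U \<subseteq> Pow E \<and>
     (\<forall>S\<in>U. \<exists>F. finite F \<and> F \<subseteq> E \<and> {T\<in>Pow E. T \<inter> F = S \<inter> F} \<subseteq> U))"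

definition weak_star_conv :: "'e set \<Rightarrow> (nat \<Rightarrow> 'e set measure) \<Rightarrow> 'e set measure \<Rightarrow> bool" where
  "weak_star_conv E Ms M \<longleftrightarrow>
     (\<forall>f. continuous_map (subgraph_top E) euclideanreal f \<and> (\<exists>B. \<forall>S\<in>Pow E. \<bar>f S\<bar> \<le> B)
        \<longrightarrow> (\<lambda>i. \<integral>S. f S \<partial>Ms i) \<longlonglongrightarrow> (\<integral>S. f S \<partial>M))"

end

theory Submission
  imports Defs
begin

lemma istop_sub: "istopology (\<lambda>U. U \<subseteq> Pow E \<and>
     (\<forall>S\<in>U. \<exists>F. finite F \<and> F \<subseteq> E \<and> {T\<in>Pow E. T \<inter> F = S \<inter> F} \<subseteq> U))"
  unfolding istopology_def
proof (rule conjI; intro allI impI)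
  fix S T :: "'a set set"
  assume S: "S \<subseteq> Pow E \<and> (\<forall>X\<in>S. \<exists>F. finite F \<and> F \<subseteq> E \<and> {T\<in>Pow E. T \<inter> F = X \<inter> F} \<subseteq> S)"
     and T: "T \<subseteq> Pow E \<and> (\<forall>X\<in>T. \<exists>F. finite F \<and> F \<subseteq> E \<and> {Ta\<in>Pow E. Ta \<inter> F = X \<inter> F} \<subseteq> T)"
  show "S \<inter> T \<subseteq> Pow E \<and> (\<forall>X\<in>S \<inter> T. \<exists>F. finite F \<and> F \<subseteq> E \<and> {Ta\<in>Pow E. Ta \<inter> F = X \<inter> F} \<subseteq> S \<inter> T)"
  proof (intro conjI ballI)
    show "S \<inter> T \<subseteq> Pow E" using conjunct1[OF S] by (rule le_infI1)
  next
    fix X assume X: "X \<in> S \<inter> T"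
    have XS: "X \<in> S" and XT: "X \<in> T" using X by simp_all
    from bspec[OF conjunct2[OF S] XS] obtain F1 where
      F1: "finite F1" "F1 \<subseteq> E" "{T\<in>Pow E. T \<inter> F1 = X \<inter> F1} \<subseteq> S" by (elim exE conjE)
    from bspec[OF conjunct2[OF T] XT] obtain F2 where
      F2: "finite F2" "F2 \<subseteq> E" "{Ta\<in>Pow E. Ta \<inter> F2 = X \<inter> F2} \<subseteq> T" by (elim exE conjE)
    have sub: "{Ta \<in> Pow E. Ta \<inter> (F1 \<union> F2) = X \<inter> (F1 \<union> F2)} \<subseteq> S \<inter> T"
    proof
      fix Y assume Y: "Y \<in> {Ta \<in> Pow E. Ta \<inter> (F1 \<union> F2) = X \<inter> (F1 \<union> F2)}"
      then have YE: "Y \<in> Pow E" and YX: "Y \<inter> (F1 \<union> F2) = X \<inter> (F1 \<union> F2)" by simp_all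
      have a: "Y \<inter> F1 = X \<inter> F1" using YX by blast
      have b: "Y \<inter> F2 = X \<inter> F2" using YX by blast
      have "Y \<in> S" using F1(3) YE a by (simp add: subset_iff)
      moreover have "Y \<in> T" using F2(3) YE b by (simp add: subset_iff)
      ultimately show "Y \<in> S \<inter> T" by (rule IntI)
    qed
    have "finite (F1 \<union> F2)" using F1(1) F2(1) by simp
    moreover have "F1 \<union> F2 \<subseteq> E" using F1(2) F2(2) by simp
    ultimately show "\<exists>F. finite F \<and> F \<subseteq> E \<and> {Ta\<in>Pow E. Ta \<inter> F = X \<inter> F} \<subseteq> S \<inter> T"
      using sub by (intro exI[of _ "F1 \<union> F2"] conjI)
  qed
next
  fix K :: "'a set set set"
  assume H: "\<forall>U\<in>K. U \<subseteq> Pow E \<and> (\<forall>S\<in>U. \<exists>F. finite F \<and> F \<subseteq> E \<and> {T\<in>Pow E. T \<inter> F = S \<inter> F} \<subseteq> U)"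
  show "\<Union>K \<subseteq> Pow E \<and> (\<forall>S\<in>\<Union>K. \<exists>F. finite F \<and> F \<subseteq> E \<and> {T\<in>Pow E. T \<inter> F = S \<inter> F} \<subseteq> \<Union>K)"
  proof (intro conjI ballI)
    show "\<Union>K \<subseteq> Pow E"
    proof (rule Union_least)
      fix U assume "U \<in> K"
      from conjunct1[OF bspec[OF H this]] show "U \<subseteq> Pow E" .
    qed
  next
    fix S assume "S \<in> \<Union>K"
    then obtain U where U: "U \<in> K" "S \<in> U" by (rule UnionE)
    from bspec[OF conjunct2[OF bspec[OF H U(1)]] U(2)] obtain F where
      F: "finite F" "F \<subseteq> E" "{T\<in>Pow E. T \<inter> F = S \<inter> F} \<subseteq> U" by (elim exE conjE)
    have "U \<subseteq> \<Union>K" using U(1) by (rule Union_upper)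
    then have "{T\<in>Pow E. T \<inter> F = S \<inter> F} \<subseteq> \<Union>K" using F(3) by (rule order_trans[rotated])
    then show "\<exists>F. finite F \<and> F \<subseteq> E \<and> {T\<in>Pow E. T \<inter> F = S \<inter> F} \<subseteq> \<Union>K"
      using F(1,2) by (intro exI[of _ F] conjI)
  qed
qed

lemma openin_sub: "openin (subgraph_top E) U \<longleftrightarrow> U \<subseteq> Pow E \<and>
     (\<forall>S\<in>U. \<exists>F. finite F \<and> F \<subseteq> E \<and> {T\<in>Pow E. T \<inter> F = S \<inter> F} \<subseteq> U)"
  unfolding subgraph_top_def using istop_sub[of E] by simp

lemma topspace_sub: "topspace (subgraph_top E) = Pow E"
proof -
  have "openin (subgraph_top E) (Pow E)" unfolding openin_sub
    by (intro conjI ballI exI[of _ "{}"]) auto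
  moreover have "topspace (subgraph_top E) \<subseteq> Pow E"
    unfolding topspace_def openin_sub by blast
  ultimately show ?thesis using openin_subset[of "subgraph_top E" "Pow E"] by blast
qed

lemma cyl_open: "finite F \<Longrightarrow> F \<subseteq> E \<Longrightarrow> openin (subgraph_top E) {T\<in>Pow E. T \<inter> F = S \<inter> F}"
  unfolding openin_sub by (intro conjI ballI exI[of _ F]) auto

lemma compact_sub: "compactin (subgraph_top E) (Pow E)"
proof -
  let ?P = "product_topology (\<lambda>_. discrete_topology (UNIV::bool set)) E"
  define \<phi> where "\<phi> g = {e\<in>E. g e}" for g :: "'a \<Rightarrow> bool"
  have cP: "compact_space ?P"
    by (simp add: compact_space_product_topology compact_space_discrete_topology)
  have cont: "continuous_map ?P (subgraph_top E) \<phi>"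
    unfolding continuous_map_def
  proof (intro conjI allI impI)
    show "\<phi> \<in> topspace ?P \<rightarrow> topspace (subgraph_top E)"
      by (auto simp: topspace_sub \<phi>_def)
  next
    fix U assume U: "openin (subgraph_top E) U"
    show "openin ?P {x \<in> topspace ?P. \<phi> x \<in> U}"
      unfolding openin_product_topology_alt
    proof (intro ballI)
      fix x assume x: "x \<in> {x \<in> topspace ?P. \<phi> x \<in> U}"
      then obtain F where F: "finite F" "F \<subseteq> E" "{T\<in>Pow E. T \<inter> F = \<phi> x \<inter> F} \<subseteq> U"
        using U unfolding openin_sub by blast
      define W where "W i = (if i \<in> F then {x i} else UNIV)" for i
      show "\<exists>U'. finite {i \<in> E. U' i \<noteq> topspace (discrete_topology UNIV)} \<and>
               (\<forall>i\<in>E. openin (discrete_topology UNIV) (U' i)) \<and> x \<in> Pi\<^sub>E E U' \<and> Pi\<^sub>E E U' \<subseteq> {x \<in> topspace ?P. \<phi> x \<in> U}"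
      proof (intro exI[of _ W] conjI)
        show "finite {i \<in> E. W i \<noteq> topspace (discrete_topology UNIV)}"
          by (rule finite_subset[OF _ F(1)]) (auto simp: W_def)
        show "\<forall>i\<in>E. openin (discrete_topology UNIV) (W i)" by simp
        show "x \<in> Pi\<^sub>E E W" using x by (auto simp: W_def PiE_iff)
        show "Pi\<^sub>E E W \<subseteq> {x \<in> topspace ?P. \<phi> x \<in> U}"
        proof
          fix y assume y: "y \<in> Pi\<^sub>E E W"
          have "\<phi> y \<inter> F = \<phi> x \<inter> F" using y F(2) by (auto simp: \<phi>_def W_def PiE_iff)
          then have "\<phi> y \<in> U" using F(3) by (auto simp: \<phi>_def)
          then show "y \<in> {x \<in> topspace ?P. \<phi> x \<in> U}" using y by (auto simp: PiE_iff)
        qed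
      qed
    qed
  qed
  have img: "\<phi> ` topspace ?P = Pow E"
  proof
    show "\<phi> ` topspace ?P \<subseteq> Pow E" by (auto simp: \<phi>_def)
  next
    show "Pow E \<subseteq> \<phi> ` topspace ?P"
    proof
      fix S assume S: "S \<in> Pow E"
      have "restrict (\<lambda>e. e \<in> S) E \<in> topspace ?P" by auto
      moreover have "\<phi> (restrict (\<lambda>e. e \<in> S) E) = S" using S by (auto simp: \<phi>_def)
      ultimately show "S \<in> \<phi> ` topspace ?P" by (metis image_eqI)
    qed
  qed
  show ?thesis using image_compactin[OF cP[unfolded compact_space_def] cont] img by simp
qed

lemma unif_cont:
  assumes f: "continuous_map (subgraph_top E) euclideanreal f" and e: "\<epsilon> > 0"
  shows "\<exists>F. finite F \<and> F \<subseteq> E \<and> (\<forall>S\<in>Pow E. \<forall>T\<in>Pow E. S \<inter> F = T \<inter> F \<longrightarrow> \<bar>f S - f T\<bar> < \<epsilon>)"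
proof -
  have "\<exists>F. finite F \<and> F \<subseteq> E \<and> {T\<in>Pow E. T \<inter> F = S \<inter> F} \<subseteq> {T \<in> Pow E. \<bar>f T - f S\<bar> < \<epsilon>/2}"
    if S: "S \<in> Pow E" for S
  proof -
    have "openin (subgraph_top E) {x \<in> topspace (subgraph_top E). f x \<in> ball (f S) (\<epsilon>/2)}"
      using openin_continuous_map_preimage[OF f, of "ball (f S) (\<epsilon>/2)"] by simp
    moreover have "{x \<in> topspace (subgraph_top E). f x \<in> ball (f S) (\<epsilon>/2)} = {x \<in> Pow E. \<bar>f x - f S\<bar> < \<epsilon>/2}"
      by (auto simp: topspace_sub dist_real_def abs_minus_commute)
    ultimately have o: "openin (subgraph_top E) {x \<in> Pow E. \<bar>f x - f S\<bar> < \<epsilon>/2}"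
      by simp
    have "S \<in> {x \<in> Pow E. \<bar>f x - f S\<bar> < \<epsilon>/2}" using S e by simp
    from bspec[OF conjunct2[OF o[unfolded openin_sub]] this] show ?thesis .
  qed
  then have ex: "\<forall>S\<in>Pow E. \<exists>F. finite F \<and> F \<subseteq> E \<and> {T\<in>Pow E. T \<inter> F = S \<inter> F} \<subseteq> {T \<in> Pow E. \<bar>f T - f S\<bar> < \<epsilon>/2}"
    by (rule ballI)
  obtain Fs where Fs0: "\<forall>S\<in>Pow E. finite (Fs S) \<and> Fs S \<subseteq> E \<and>
      {T\<in>Pow E. T \<inter> Fs S = S \<inter> Fs S} \<subseteq> {T \<in> Pow E. \<bar>f T - f S\<bar> < \<epsilon>/2}"
    using bchoice[OF ex] by (elim exE) (rule that)
  have Fs: "finite (Fs S) \<and> Fs S \<subseteq> E \<and>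
      {T\<in>Pow E. T \<inter> Fs S = S \<inter> Fs S} \<subseteq> {T \<in> Pow E. \<bar>f T - f S\<bar> < \<epsilon>/2}" if "S \<in> Pow E" for S
    using bspec[OF Fs0 that] .
  define C where "C S = {T\<in>Pow E. T \<inter> Fs S = S \<inter> Fs S}" for S
  have "\<forall>U \<in> C ` Pow E. openin (subgraph_top E) U"
  proof
    fix U assume "U \<in> C ` Pow E"
    then obtain S where S: "S \<in> Pow E" "U = C S" by blast
    show "openin (subgraph_top E) U" unfolding S(2) C_def
      using Fs[OF S(1)] by (intro cyl_open) auto
  qed
  moreover have "Pow E \<subseteq> \<Union>(C ` Pow E)" unfolding C_def by blast
  ultimately obtain K where K: "finite K" "K \<subseteq> C ` Pow E" "Pow E \<subseteq> \<Union>K"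
    using compact_sub[of E] unfolding compactin_def by meson
  then obtain K' where K': "finite K'" "K' \<subseteq> Pow E" "K = C ` K'"
    by (meson finite_subset_image)
  define F where "F = \<Union>(Fs ` K')"
  show ?thesis
  proof (intro exI[of _ F] conjI ballI impI)
    show "finite F" unfolding F_def using K' Fs by blast
    show "F \<subseteq> E" unfolding F_def using K' Fs by blast
  next
    fix S T assume S: "S \<in> Pow E" and T: "T \<in> Pow E" and ST: "S \<inter> F = T \<inter> F"
    obtain R where R: "R \<in> K'" "S \<in> C R" using K K' S by blast
    have sub: "Fs R \<subseteq> F" unfolding F_def using R by blast
    have "T \<in> C R" using R(2) T ST sub unfolding C_def by blast
    then have "\<bar>f T - f R\<bar> < \<epsilon>/2" using Fs[of R] R K' unfolding C_def by blast
    moreover have "\<bar>f S - f R\<bar> < \<epsilon>/2" using Fs[of R] R K' unfolding C_def by blast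
    ultimately show "\<bar>f S - f T\<bar> < \<epsilon>" by linarith
  qed
qed

lemma space_sub: "space (subgraph_space E) = Pow E"
  unfolding subgraph_space_def by (rule space_measure_of) blast

lemma cyl_sets: "e \<in> E \<Longrightarrow> {S\<in>Pow E. e \<in> S} \<in> sets (subgraph_space E)"
  unfolding subgraph_space_def by (subst sets_measure_of) (blast, rule sigma_sets.Basic, blast)

lemma fin_inter_sets:
  assumes "finite I" "\<And>i. i \<in> I \<Longrightarrow> B i \<in> sets M"
  shows "space M \<inter> (\<Inter>i\<in>I. B i) \<in> sets M"
  using assms
proof (induction I rule: finite_induct)
  case empty then show ?case by simp
next
  case (insert x I)
  have "space M \<inter> (\<Inter>i\<in>insert x I. B i) = B x \<inter> (space M \<inter> (\<Inter>i\<in>I. B i))" by auto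
  then show ?case using insert by (metis insertI1 insert_iff sets.Int)
qed

lemma restr_meas:
  assumes F: "finite F" "F \<subseteq> E"
  shows "(\<lambda>S. S \<inter> F) \<in> measurable (subgraph_space E) (count_space (Pow F))"
proof -
  have "(\<lambda>S. S \<inter> F) -` {A} \<inter> Pow E \<in> sets (subgraph_space E)" if A: "A \<in> Pow F" for A
  proof -
    define B where "B e = (if e \<in> A then {S\<in>Pow E. e \<in> S} else Pow E - {S\<in>Pow E. e \<in> S})" for e
    have eq: "(\<lambda>S. S \<inter> F) -` {A} \<inter> Pow E = space (subgraph_space E) \<inter> (\<Inter>e\<in>F. B e)"
    proof (intro Set.set_eqI iffI)
      fix S assume "S \<in> (\<lambda>S. S \<inter> F) -` {A} \<inter> Pow E"
      then have "S \<subseteq> E" "S \<inter> F = A" by auto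
      then show "S \<in> space (subgraph_space E) \<inter> (\<Inter>e\<in>F. B e)"
        unfolding B_def space_sub by auto
    next
      fix S assume S: "S \<in> space (subgraph_space E) \<inter> (\<Inter>e\<in>F. B e)"
      then have SE: "S \<subseteq> E" and h: "\<And>e. e \<in> F \<Longrightarrow> S \<in> B e" by (auto simp: space_sub)
      have "S \<inter> F = A"
      proof (intro Set.set_eqI iffI)
        fix x assume x: "x \<in> S \<inter> F"
        then have "S \<in> B x" using h by blast
        then show "x \<in> A" using x unfolding B_def by (cases "x \<in> A") auto
      next
        fix x assume x: "x \<in> A"
        then have xF: "x \<in> F" using A by blast
        then have "S \<in> B x" using h by blast
        then show "x \<in> S \<inter> F" using x xF unfolding B_def by simp
      qed
      then show "S \<in> (\<lambda>S. S \<inter> F) -` {A} \<inter> Pow E" using SE by auto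
    qed
    have Bs: "B e \<in> sets (subgraph_space E)" if "e \<in> F" for e
    proof (cases "e \<in> A")
      case True then show ?thesis using that F cyl_sets[of e E] unfolding B_def by auto
    next
      case False
      have "Pow E - {S\<in>Pow E. e \<in> S} \<in> sets (subgraph_space E)"
        using that F cyl_sets[of e E] sets.top[of "subgraph_space E"] space_sub[of E]
        by (metis sets.Diff subsetD)
      then show ?thesis using False unfolding B_def by simp
    qed
    show ?thesis unfolding eq using F(1) Bs by (rule fin_inter_sets)
  qed
  then show ?thesis using F
    by (subst measurable_count_space_eq2) (auto simp: space_sub)
qed

lemma cont_meas:
  assumes f: "continuous_map (subgraph_top E) euclideanreal f"
  shows "f \<in> borel_measurable (subgraph_space E)"
proof -
  have ex: "\<forall>n. \<exists>F. finite F \<and> F \<subseteq> E \<and> (\<forall>S\<in>Pow E. \<forall>T\<in>Pow E. S \<inter> F = T \<inter> F \<longrightarrow> \<bar>f S - f T\<bar> < 1 / Suc n)"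
    using unif_cont[OF f] by simp
  obtain Fn where Fn: "\<And>n. finite (Fn n) \<and> Fn n \<subseteq> E \<and>
     (\<forall>S\<in>Pow E. \<forall>T\<in>Pow E. S \<inter> Fn n = T \<inter> Fn n \<longrightarrow> \<bar>f S - f T\<bar> < 1 / Suc n)"
    using choice[OF ex] by blast
  show ?thesis
  proof (rule borel_measurable_LIMSEQ_real[where u="\<lambda>n S. f (S \<inter> Fn n)"])
    fix n
    have "(\<lambda>S. S \<inter> Fn n) \<in> measurable (subgraph_space E) (count_space (Pow (Fn n)))"
      using Fn[of n] by (intro restr_meas) auto
    then show "(\<lambda>S. f (S \<inter> Fn n)) \<in> borel_measurable (subgraph_space E)"
      by (rule measurable_compose) (simp add: measurable_count_space_eq1)
  next
    fix S assume S: "S \<in> space (subgraph_space E)"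
    then have S': "S \<in> Pow E" by (simp add: space_sub)
    have b: "\<bar>f (S \<inter> Fn n) - f S\<bar> < 1 / Suc n" for n
    proof -
      have "S \<inter> Fn n \<in> Pow E" "(S \<inter> Fn n) \<inter> Fn n = S \<inter> Fn n" using S' by auto
      then show ?thesis using Fn[of n] S' by blast
    qed
    show "(\<lambda>n. f (S \<inter> Fn n)) \<longlonglongrightarrow> f S"
    proof (rule LIMSEQ_I)
      fix r :: real assume r: "r > 0"
      obtain N where N: "1 / Suc N < r" using r by (meson nat_approx_posE)
      show "\<exists>no. \<forall>n\<ge>no. norm (f (S \<inter> Fn n) - f S) < r"
      proof (intro exI[of _ N] allI impI)
        fix n assume "N \<le> n"
        then have "1 / real (Suc n) \<le> 1 / Suc N" by (simp add: frac_le)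
        then show "norm (f (S \<inter> Fn n) - f S) < r" using b[of n] N by simp
      qed
    qed
  qed
qed

lemma main_gen:
  fixes X Y :: "nat \<Rightarrow> 'q \<Rightarrow> 'e set" and \<mu> :: "nat \<Rightarrow> 'q measure"
  assumes prob: "\<And>i. prob_space (\<mu> i)"
    and Xm: "\<And>i. X i \<in> measurable (\<mu> i) (subgraph_space E)"
    and Ym: "\<And>i. Y i \<in> measurable (\<mu> i) (subgraph_space E)"
    and XY: "\<And>F. finite F \<Longrightarrow> F \<subseteq> E \<Longrightarrow>
               eventually (\<lambda>i. \<forall>x\<in>space (\<mu> i). X i x \<inter> F = Y i x \<inter> F) sequentially"
  shows "weak_star_conv E (\<lambda>i. distr (\<mu> i) (subgraph_space E) (X i)) \<nu>
     \<longleftrightarrow> weak_star_conv E (\<lambda>i. distr (\<mu> i) (subgraph_space E) (Y i)) \<nu>"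
proof -
  have key: "(\<lambda>i. (\<integral>S. f S \<partial>distr (\<mu> i) (subgraph_space E) (X i)) - (\<integral>S. f S \<partial>distr (\<mu> i) (subgraph_space E) (Y i))) \<longlonglongrightarrow> 0"
    if fc: "continuous_map (subgraph_top E) euclideanreal f" and fb: "\<forall>S\<in>Pow E. \<bar>f S\<bar> \<le> B" for f B
  proof -
    have fm: "f \<in> borel_measurable (subgraph_space E)" using cont_meas[OF fc] .
    have XP: "X i x \<in> Pow E" if "x \<in> space (\<mu> i)" for i x
      using measurable_space[OF Xm that] by (simp add: space_sub)
    have YP: "Y i x \<in> Pow E" if "x \<in> space (\<mu> i)" for i x
      using measurable_space[OF Ym that] by (simp add: space_sub)
    have fXm: "(\<lambda>x. f (X i x)) \<in> borel_measurable (\<mu> i)" for i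
      using measurable_compose[OF Xm fm] by (simp add: comp_def)
    have fYm: "(\<lambda>x. f (Y i x)) \<in> borel_measurable (\<mu> i)" for i
      using measurable_compose[OF Ym fm] by (simp add: comp_def)
    have iX: "integrable (\<mu> i) (\<lambda>x. f (X i x))" for i
      using prob_space.finite_measure[OF prob] fXm XP fb
      by (intro finite_measure.integrable_const_bound[where B=B]) auto
    have iY: "integrable (\<mu> i) (\<lambda>x. f (Y i x))" for i
      using prob_space.finite_measure[OF prob] fYm YP fb
      by (intro finite_measure.integrable_const_bound[where B=B]) auto
    have eqd: "(\<integral>S. f S \<partial>distr (\<mu> i) (subgraph_space E) (X i)) - (\<integral>S. f S \<partial>distr (\<mu> i) (subgraph_space E) (Y i))
        = (\<integral>x. f (X i x) - f (Y i x) \<partial>\<mu> i)" for i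
      unfolding integral_distr[OF Xm fm] integral_distr[OF Ym fm]
      by (rule Bochner_Integration.integral_diff[OF iX iY, symmetric])
    show ?thesis
    proof (rule tendstoI)
      fix \<epsilon> :: real assume e: "\<epsilon> > 0"
      obtain F where F: "finite F" "F \<subseteq> E"
        "\<forall>S\<in>Pow E. \<forall>T\<in>Pow E. S \<inter> F = T \<inter> F \<longrightarrow> \<bar>f S - f T\<bar> < \<epsilon>/2"
        using unif_cont[OF fc, of "\<epsilon>/2"] e by auto
      show "\<forall>\<^sub>F i in sequentially. dist ((\<integral>S. f S \<partial>distr (\<mu> i) (subgraph_space E) (X i)) - (\<integral>S. f S \<partial>distr (\<mu> i) (subgraph_space E) (Y i))) 0 < \<epsilon>"
        using XY[OF F(1,2)]
      proof eventually_elim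
        case (elim i)
        have pt: "norm (f (X i x) - f (Y i x)) \<le> \<epsilon>/2" if x: "x \<in> space (\<mu> i)" for x
        proof -
          have "X i x \<inter> F = Y i x \<inter> F" using elim x by blast
          then have "\<bar>f (X i x) - f (Y i x)\<bar> < \<epsilon>/2" using F(3) XP[OF x] YP[OF x] by blast
          then show ?thesis by simp
        qed
        have "norm (\<integral>x. f (X i x) - f (Y i x) \<partial>\<mu> i) \<le> (\<integral>x. norm (f (X i x) - f (Y i x)) \<partial>\<mu> i)"
          by (rule integral_norm_bound)
        also have "\<dots> \<le> (\<integral>x. \<epsilon>/2 \<partial>\<mu> i)"
        proof (rule integral_mono)
          show "integrable (\<mu> i) (\<lambda>x. norm (f (X i x) - f (Y i x)))"
            by (rule integrable_norm[OF Bochner_Integration.integrable_diff[OF iX iY]])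
          show "integrable (\<mu> i) (\<lambda>x. \<epsilon>/2)"
            by (rule finite_measure.integrable_const[OF prob_space.finite_measure[OF prob]])
          show "\<And>x. x \<in> space (\<mu> i) \<Longrightarrow> norm (f (X i x) - f (Y i x)) \<le> \<epsilon>/2" by (rule pt)
        qed
        also have "\<dots> = \<epsilon>/2" using prob_space.prob_space[OF prob] by simp
        finally show ?case using eqd[of i] e by (simp add: dist_real_def)
      qed
    qed
  qed
  show ?thesis unfolding weak_star_conv_def
  proof (intro iffI allI impI)
    fix f assume H: "\<forall>f. continuous_map (subgraph_top E) euclideanreal f \<and> (\<exists>B. \<forall>S\<in>Pow E. \<bar>f S\<bar> \<le> B) \<longrightarrow>
           (\<lambda>i. \<integral>S. f S \<partial>distr (\<mu> i) (subgraph_space E) (X i)) \<longlonglongrightarrow> (\<integral>S. f S \<partial>\<nu>)"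
      and f: "continuous_map (subgraph_top E) euclideanreal f \<and> (\<exists>B. \<forall>S\<in>Pow E. \<bar>f S\<bar> \<le> B)"
    from conjunct2[OF f] obtain B where "\<forall>S\<in>Pow E. \<bar>f S\<bar> \<le> B" by (elim exE)
    from tendsto_diff[OF H[rule_format, OF f] key[OF conjunct1[OF f] this]]
    show "(\<lambda>i. \<integral>S. f S \<partial>distr (\<mu> i) (subgraph_space E) (Y i)) \<longlonglongrightarrow> (\<integral>S. f S \<partial>\<nu>)" by simp
  next
    fix f assume H: "\<forall>f. continuous_map (subgraph_top E) euclideanreal f \<and> (\<exists>B. \<forall>S\<in>Pow E. \<bar>f S\<bar> \<le> B) \<longrightarrow>
           (\<lambda>i. \<integral>S. f S \<partial>distr (\<mu> i) (subgraph_space E) (Y i)) \<longlonglongrightarrow> (\<integral>S. f S \<partial>\<nu>)"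
      and f: "continuous_map (subgraph_top E) euclideanreal f \<and> (\<exists>B. \<forall>S\<in>Pow E. \<bar>f S\<bar> \<le> B)"
    from conjunct2[OF f] obtain B where "\<forall>S\<in>Pow E. \<bar>f S\<bar> \<le> B" by (elim exE)
    from tendsto_add[OF H[rule_format, OF f] key[OF conjunct1[OF f] this]]
    show "(\<lambda>i. \<integral>S. f S \<partial>distr (\<mu> i) (subgraph_space E) (X i)) \<longlonglongrightarrow> (\<integral>S. f S \<partial>\<nu>)" by simp
  qed
qed

lemma lift_meas:
  "(\<lambda>S. lift_sub E N S \<inter> D) \<in> measurable (subgraph_space (quot_edges E N)) (subgraph_space E)"
  unfolding subgraph_space_def[of E]
proof (rule measurable_measure_of)
  show "{{S \<in> Pow E. e \<in> S} |e. e \<in> E} \<subseteq> Pow (Pow E)" by blast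
  show "(\<lambda>S. lift_sub E N S \<inter> D) \<in> space (subgraph_space (quot_edges E N)) \<rightarrow> Pow E"
    by (auto simp: lift_sub_def space_sub)
next
  fix y assume "y \<in> {{S \<in> Pow E. e \<in> S} |e. e \<in> E}"
  then obtain e where e: "e \<in> E" "y = {S \<in> Pow E. e \<in> S}" by blast
  have oe: "edge_orbit N e \<in> quot_edges E N" using e unfolding quot_edges_def by blast
  show "(\<lambda>S. lift_sub E N S \<inter> D) -` y \<inter> space (subgraph_space (quot_edges E N)) \<in> sets (subgraph_space (quot_edges E N))"
  proof (cases "e \<in> D")
    case True
    have "(\<lambda>S. lift_sub E N S \<inter> D) -` y \<inter> space (subgraph_space (quot_edges E N))
        = {T \<in> Pow (quot_edges E N). edge_orbit N e \<in> T}"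
      using e True by (auto simp: space_sub lift_sub_def)
    then show ?thesis using cyl_sets[OF oe] by simp
  next
    case False
    have "(\<lambda>S. lift_sub E N S \<inter> D) -` y \<inter> space (subgraph_space (quot_edges E N)) = {}"
      using e False by auto
    then show ?thesis by simp
  qed
qed

theorem lemma4p2:
  fixes V :: "'v set" and E :: "'v set set"
    and G :: "('v \<Rightarrow> 'v) set" and Gs :: "nat \<Rightarrow> ('v \<Rightarrow> 'v) set"
    and VD :: "nat \<Rightarrow> 'v set" and ED :: "nat \<Rightarrow> 'v set set"
    and \<mu> :: "nat \<Rightarrow> 'v set set set measure" and \<nu> :: "'v set set measure"
  assumes graph: "simple_graph V E" and conn: "graph_connected V E"
    and locfin: "locally_finite V E" and ctble: "countable V"
    and subG: "subgroup G (aut_group V E)"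
    and normal: "\<And>i. Gs i \<lhd> (aut_group V E)\<lparr>carrier := G\<rparr>"
    and closed: "\<And>i. closedin (perm_top V G) (Gs i)"
    and decr: "\<And>i. Gs (Suc i) \<subseteq> Gs i"
    and amen: "\<And>i. amenable ((aut_group V E)\<lparr>carrier := G\<rparr> Mod Gs i)
                       (quot_top (perm_top V G) (carrier ((aut_group V E)\<lparr>carrier := G\<rparr> Mod Gs i)))"
    and trivial: "(\<Inter>i. Gs i) = {id}"
    and D_sub: "\<And>i. VD i \<subseteq> V \<and> ED i \<subseteq> E \<and> (\<forall>e\<in>ED i. e \<subseteq> VD i)"
    and D_conn: "\<And>i. graph_connected (VD i) (ED i)"
    and D_incr: "\<And>i. VD i \<subseteq> VD (Suc i) \<and> ED i \<subseteq> ED (Suc i)"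
    and D_union: "(\<Union>i. VD i) = V" "(\<Union>i. ED i) = E"
    and D_bij: "\<And>i. bij_betw (edge_orbit (Gs i)) (ED i) (quot_edges E (Gs i))"
    and rand_i: "\<And>i. prob_space (\<mu> i)"
    and rand_i_sets: "\<And>i. sets (\<mu> i) = sets (subgraph_space (quot_edges E (Gs i)))"
    and rand: "prob_space \<nu>" and rand_sets: "sets \<nu> = sets (subgraph_space E)"
  shows "weak_star_conv E (\<lambda>i. distr (\<mu> i) (subgraph_space E) (lift_sub E (Gs i))) \<nu>
     \<longleftrightarrow> weak_star_conv E (\<lambda>i. distr (\<mu> i) (subgraph_space E) (\<lambda>S. lift_sub E (Gs i) S \<inter> ED i)) \<nu>"
proof (rule main_gen)
  show "\<And>i. prob_space (\<mu> i)" by (rule rand_i)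
  show "(\<lambda>S. lift_sub E (Gs i) S \<inter> ED i) \<in> measurable (\<mu> i) (subgraph_space E)" for i
    by (subst measurable_cong_sets[OF rand_i_sets[of i] refl]) (rule lift_meas)
  show "\<And>i. lift_sub E (Gs i) \<in> measurable (\<mu> i) (subgraph_space E)"
  proof -
    fix i
    have eq: "\<And>S. lift_sub E (Gs i) S \<inter> E = lift_sub E (Gs i) S" by (auto simp: lift_sub_def)
    have m: "lift_sub E (Gs i) \<in> measurable (subgraph_space (quot_edges E (Gs i))) (subgraph_space E)"
      using lift_meas[of E "Gs i" E] unfolding eq .
    then show "lift_sub E (Gs i) \<in> measurable (\<mu> i) (subgraph_space E)"
      by (subst measurable_cong_sets[OF rand_i_sets[of i] refl])
  qed
next
  fix F assume F: "finite F" "F \<subseteq> E"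
  have mono: "ED n \<subseteq> ED m" if "n \<le> m" for n m
    using lift_Suc_mono_le[of ED, OF _ that] D_incr by blast
  have "\<forall>e\<in>F. eventually (\<lambda>i. e \<in> ED i) sequentially"
  proof
    fix e assume "e \<in> F"
    then obtain n where n: "e \<in> ED n" using F D_union(2) by blast
    show "eventually (\<lambda>i. e \<in> ED i) sequentially"
      using mono n unfolding eventually_sequentially by blast
  qed
  then have "eventually (\<lambda>i. \<forall>e\<in>F. e \<in> ED i) sequentially"
    by (rule eventually_ball_finite[OF F(1)])
  then show "eventually (\<lambda>i. \<forall>x\<in>space (\<mu> i). lift_sub E (Gs i) x \<inter> F = (lift_sub E (Gs i) x \<inter> ED i) \<inter> F) sequentially"
    by eventually_elim auto
qed

end
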